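(* Let $a(t), b(t), c(t), d(t), f(t), g(t)$ be suitable real-valued functions of time, and consider the one-dimensional time-dependent Schrödinger equation $$i\psi_t = -a(t)\psi_{xx} + b(t)x^2\psi - ic(t)x\psi_x - id(t)\psi - f(t)x\psi + ig(t)\psi_x .$$ Then the substitution $$\psi = \frac{e^{i(\alpha(t)x^2+\delta(t)x+\kappa(t))}}{\sqrt{\mu(t)}}\,\chi(\xi,\tau),\qquad \xi=\beta(t)x+\varepsilon(t),\quad \tau=\gamma(t)$$ transforms this non-autonomous and inhomogeneous Schrödinger equation into the autonomous form $$-i\chi_\tau = -\chi_{\xi\xi} + c_0\xi^2\chi \qquad (c_0=0,1)$$ provided that $$\frac{d\alpha}{dt} + b + 2c\alpha + 4a\alpha^2 = c_0 a\beta^4,$$ $$\frac{d\beta}{dt} + (c+4a\alpha)\beta = 0,$$ $$\frac{d\gamma}{dt} + a\beta^2 = 0,$$ $$\frac{d\delta}{dt} + (c+4a\alpha)\delta = f + 2g\alpha + 2c_0 a\beta^3\varepsilon,$$ $$\frac{d\varepsilon}{dt} = (g-2a\delta)\beta,$$ $$\frac{d\kappa}{dt} = g\delta - a\delta^2 + c_0 a\beta^2\varepsilon^2 .$$ Here $$\alpha = \frac{1}{4a}\frac{\mu'}{\mu} - \frac{d}{2a}.$$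
   Context: Generalized (driven) harmonic oscillators: the Hamiltonian is an arbitrary quadratic in $p=-i\partial/\partial x$ and $x$ with time-dependent real coefficients $a,b,c,d,f,g$. The functions $\alpha,\beta,\gamma,\delta,\varepsilon,\kappa,\mu$ are functions of $t$ only. *)

theory Defs
  imports "HOL-Analysis.Analysis"
begin

end

theory Submission imports Defs "HOL-Analysis.Analysis" begin

lemma vd_exp:
  assumes "(\<phi> has_real_derivative D) (at t)"
  shows "((\<lambda>s. exp (\<i> * of_real (\<phi> s))) has_vector_derivative (\<i> * of_real D * exp (\<i> * of_real (\<phi> t)))) (at t)"
proof -
  have 1: "((\<lambda>s. \<i> * of_real (\<phi> s)) has_vector_derivative \<i> * of_real D) (at t)"
    using assms by (intro derivative_intros)
  have "((exp \<circ> (\<lambda>s. \<i> * of_real (\<phi> s))) has_vector_derivative (\<i> * of_real D) * exp (\<i> * of_real (\<phi> t))) (at t)"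
    by (rule field_vector_diff_chain_at[OF 1]) (rule DERIV_exp)
  then show ?thesis by (simp add: o_def)
qed

lemma vd_chain2:
  fixes chi X Y :: "real \<Rightarrow> real \<Rightarrow> complex"
  assumes cd: "\<And>\<xi> \<tau>. ((\<lambda>p. chi (fst p) (snd p)) has_derivative
         (\<lambda>h. of_real (fst h) * X \<xi> \<tau> + of_real (snd h) * Y \<xi> \<tau>)) (at (\<xi>, \<tau>))"
    and dp: "(p has_real_derivative p') (at t)" and dq: "(q has_real_derivative q') (at t)"
  shows "((\<lambda>s. chi (p s) (q s)) has_vector_derivative
           (of_real p' * X (p t) (q t) + of_real q' * Y (p t) (q t))) (at t)"
proof -
  have 1: "((\<lambda>s. (p s, q s)) has_derivative (\<lambda>h. (h * p', h * q'))) (at t)"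
    using has_derivative_Pair[OF dp[unfolded has_field_derivative_def] dq[unfolded has_field_derivative_def]]
    by (simp add: mult.commute)
  have 2: "(((\<lambda>pp. chi (fst pp) (snd pp)) \<circ> (\<lambda>s. (p s, q s))) has_derivative
       ((\<lambda>h. of_real (fst h) * X (p t) (q t) + of_real (snd h) * Y (p t) (q t)) \<circ> (\<lambda>h. (h * p', h * q')))) (at t)"
    by (rule diff_chain_at[OF 1 cd])
  show ?thesis unfolding has_vector_derivative_def
    using 2 by (simp add: o_def scaleR_conv_of_real algebra_simps)
qed

theorem lemma1:
  fixes a b c d f g \<alpha> \<beta> \<gamma> \<delta> \<epsilon> \<kappa> \<mu> :: "real \<Rightarrow> real"
    and \<alpha>' \<beta>' \<gamma>' \<delta>' \<epsilon>' \<kappa>' \<mu>' :: "real \<Rightarrow> real"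
    and T :: "real set"
    and c0 :: real
    and chi chi_x chi_xx chi_t :: "real \<Rightarrow> real \<Rightarrow> complex"
  assumes T_open: "open T"
    and c0: "c0 = 0 \<or> c0 = 1"
    and a_nz: "\<And>t. t \<in> T \<Longrightarrow> a t \<noteq> 0"
    and mu_pos: "\<And>t. t \<in> T \<Longrightarrow> \<mu> t > 0"
    and d_alpha: "\<And>t. t \<in> T \<Longrightarrow> (\<alpha> has_real_derivative \<alpha>' t) (at t)"
    and d_beta: "\<And>t. t \<in> T \<Longrightarrow> (\<beta> has_real_derivative \<beta>' t) (at t)"
    and d_gamma: "\<And>t. t \<in> T \<Longrightarrow> (\<gamma> has_real_derivative \<gamma>' t) (at t)"
    and d_delta: "\<And>t. t \<in> T \<Longrightarrow> (\<delta> has_real_derivative \<delta>' t) (at t)"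
    and d_eps: "\<And>t. t \<in> T \<Longrightarrow> (\<epsilon> has_real_derivative \<epsilon>' t) (at t)"
    and d_kappa: "\<And>t. t \<in> T \<Longrightarrow> (\<kappa> has_real_derivative \<kappa>' t) (at t)"
    and d_mu: "\<And>t. t \<in> T \<Longrightarrow> (\<mu> has_real_derivative \<mu>' t) (at t)"
    and alpha_def: "\<And>t. t \<in> T \<Longrightarrow> \<alpha> t = \<mu>' t / (4 * a t * \<mu> t) - d t / (2 * a t)"
    and eq_alpha: "\<And>t. t \<in> T \<Longrightarrow>
       \<alpha>' t + b t + 2 * c t * \<alpha> t + 4 * a t * (\<alpha> t)\<^sup>2 = c0 * a t * (\<beta> t) ^ 4"
    and eq_beta: "\<And>t. t \<in> T \<Longrightarrow> \<beta>' t + (c t + 4 * a t * \<alpha> t) * \<beta> t = 0"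
    and eq_gamma: "\<And>t. t \<in> T \<Longrightarrow> \<gamma>' t + a t * (\<beta> t)\<^sup>2 = 0"
    and eq_delta: "\<And>t. t \<in> T \<Longrightarrow>
       \<delta>' t + (c t + 4 * a t * \<alpha> t) * \<delta> t
         = f t + 2 * g t * \<alpha> t + 2 * c0 * a t * (\<beta> t) ^ 3 * \<epsilon> t"
    and eq_eps: "\<And>t. t \<in> T \<Longrightarrow> \<epsilon>' t = (g t - 2 * a t * \<delta> t) * \<beta> t"
    and eq_kappa: "\<And>t. t \<in> T \<Longrightarrow>
       \<kappa>' t = g t * \<delta> t - a t * (\<delta> t)\<^sup>2 + c0 * a t * (\<beta> t)\<^sup>2 * (\<epsilon> t)\<^sup>2"
    and chi_diff: "\<And>\<xi> \<tau>. ((\<lambda>p. chi (fst p) (snd p)) has_derivative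
         (\<lambda>h. of_real (fst h) * chi_x \<xi> \<tau> + of_real (snd h) * chi_t \<xi> \<tau>)) (at (\<xi>, \<tau>))"
    and chi_diff2: "\<And>\<xi> \<tau>. ((\<lambda>y. chi_x y \<tau>) has_vector_derivative chi_xx \<xi> \<tau>) (at \<xi>)"
    and chi_eq: "\<And>\<xi> \<tau>. - \<i> * chi_t \<xi> \<tau>
         = - chi_xx \<xi> \<tau> + of_real (c0 * \<xi>\<^sup>2) * chi \<xi> \<tau>"
  defines "\<psi> \<equiv> (\<lambda>x t. exp (\<i> * of_real (\<alpha> t * x\<^sup>2 + \<delta> t * x + \<kappa> t))
                      / of_real (sqrt (\<mu> t)) * chi (\<beta> t * x + \<epsilon> t) (\<gamma> t))"
  shows "\<exists>psi_t psi_x psi_xx. \<forall>x. \<forall>t\<in>T.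
           ((\<lambda>s. \<psi> x s) has_vector_derivative psi_t x t) (at t)
         \<and> ((\<lambda>y. \<psi> y t) has_vector_derivative psi_x x t) (at x)
         \<and> ((\<lambda>y. psi_x y t) has_vector_derivative psi_xx x t) (at x)
         \<and> \<i> * psi_t x t
             = - of_real (a t) * psi_xx x t + of_real (b t * x\<^sup>2) * \<psi> x t
               - \<i> * of_real (c t * x) * psi_x x t - \<i> * of_real (d t) * \<psi> x t
               - of_real (f t * x) * \<psi> x t + \<i> * of_real (g t) * psi_x x t"
proof -
  define E where "E \<equiv> (\<lambda>x t. exp (\<i> * of_real (\<alpha> t * x\<^sup>2 + \<delta> t * x + \<kappa> t)))"
  define m where "m \<equiv> (\<lambda>t. (of_real (1 / sqrt (\<mu> t)) :: complex))"
  define PT where "PT \<equiv> (\<lambda>x t. E x t * m t * ((\<i> * of_real (\<alpha>' t * x\<^sup>2 + \<delta>' t * x + \<kappa>' t) - of_real (2 * a t * \<alpha> t + d t)) * chi (\<beta> t * x + \<epsilon> t) (\<gamma> t)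
        + of_real (\<beta>' t * x + \<epsilon>' t) * chi_x (\<beta> t * x + \<epsilon> t) (\<gamma> t) + of_real (\<gamma>' t) * chi_t (\<beta> t * x + \<epsilon> t) (\<gamma> t)))"
  define PX where "PX \<equiv> (\<lambda>x t. E x t * m t * (\<i> * of_real (2 * \<alpha> t * x + \<delta> t) * chi (\<beta> t * x + \<epsilon> t) (\<gamma> t)
        + of_real (\<beta> t) * chi_x (\<beta> t * x + \<epsilon> t) (\<gamma> t)))"
  define PXX where "PXX \<equiv> (\<lambda>x t. E x t * m t * ((\<i> * of_real (2 * \<alpha> t) - (of_real (2 * \<alpha> t * x + \<delta> t))\<^sup>2) * chi (\<beta> t * x + \<epsilon> t) (\<gamma> t)
        + 2 * \<i> * of_real (\<beta> t * (2 * \<alpha> t * x + \<delta> t)) * chi_x (\<beta> t * x + \<epsilon> t) (\<gamma> t)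
        + of_real ((\<beta> t)\<^sup>2) * chi_xx (\<beta> t * x + \<epsilon> t) (\<gamma> t)))"
  have psi_eq: "\<psi> x t = E x t * m t * chi (\<beta> t * x + \<epsilon> t) (\<gamma> t)" for x t
    unfolding \<psi>_def E_def m_def by (simp add: divide_inverse of_real_inverse)
  have psiX_eq: "PX y t = E y t * m t * (\<i> * of_real (2 * \<alpha> t * y + \<delta> t) * chi (\<beta> t * y + \<epsilon> t) (\<gamma> t)
        + of_real (\<beta> t) * chi_x (\<beta> t * y + \<epsilon> t) (\<gamma> t))" for y t
    unfolding PX_def ..
  show ?thesis
  proof (rule exI[of _ PT], rule exI[of _ PX], rule exI[of _ PXX], intro allI ballI conjI)
    fix x t assume tT: "t \<in> T"
    have key: "\<mu>' t / (2 * \<mu> t) = 2 * a t * \<alpha> t + d t"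
      using alpha_def[OF tT] a_nz[OF tT] mu_pos[OF tT] by (simp add: field_simps)
    show "((\<lambda>s. \<psi> x s) has_vector_derivative PT x t) (at t)"
    proof -
      have dphi: "((\<lambda>s. \<alpha> s * x\<^sup>2 + \<delta> s * x + \<kappa> s) has_real_derivative (\<alpha>' t * x\<^sup>2 + \<delta>' t * x + \<kappa>' t)) (at t)"
        by (auto intro!: derivative_eq_intros d_alpha[OF tT] d_delta[OF tT] d_kappa[OF tT])
      have dE: "((\<lambda>s. E x s) has_vector_derivative (\<i> * of_real (\<alpha>' t * x\<^sup>2 + \<delta>' t * x + \<kappa>' t) * E x t)) (at t)"
        unfolding E_def by (rule vd_exp[OF dphi])
      have s1: "((\<lambda>s. sqrt (\<mu> s)) has_real_derivative (inverse (sqrt (\<mu> t)) / 2 * \<mu>' t)) (at t)"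
        by (rule DERIV_chain2[OF DERIV_real_sqrt[OF mu_pos[OF tT]] d_mu[OF tT]])
      have s2: "((\<lambda>s. inverse (sqrt (\<mu> s))) has_real_derivative (- ((inverse (sqrt (\<mu> t)) / 2 * \<mu>' t) * inverse ((sqrt (\<mu> t)) ^ Suc (Suc 0))))) (at t)"
        by (rule DERIV_inverse_fun[OF s1]) (use mu_pos[OF tT] in simp)
      have s3: "- ((inverse (sqrt (\<mu> t)) / 2 * \<mu>' t) * inverse ((sqrt (\<mu> t)) ^ Suc (Suc 0))) = - (\<mu>' t / (2 * \<mu> t)) * (1 / sqrt (\<mu> t))"
        using mu_pos[OF tT] by (simp add: field_simps)
      have dsq: "((\<lambda>s. 1 / sqrt (\<mu> s)) has_real_derivative (- (2 * a t * \<alpha> t + d t) * (1 / sqrt (\<mu> t)))) (at t)"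
        using s2 unfolding s3 key by (simp add: divide_inverse)
      have dm: "(m has_vector_derivative of_real (- (2 * a t * \<alpha> t + d t) * (1 / sqrt (\<mu> t)))) (at t)"
        unfolding m_def by (rule has_vector_derivative_of_real[OF dsq])
      have dp: "((\<lambda>s. \<beta> s * x + \<epsilon> s) has_real_derivative (\<beta>' t * x + \<epsilon>' t)) (at t)"
        by (auto intro!: derivative_eq_intros d_beta[OF tT] d_eps[OF tT])
      have dK: "((\<lambda>s. chi (\<beta> s * x + \<epsilon> s) (\<gamma> s)) has_vector_derivative
           (of_real (\<beta>' t * x + \<epsilon>' t) * chi_x (\<beta> t * x + \<epsilon> t) (\<gamma> t) + of_real (\<gamma>' t) * chi_t (\<beta> t * x + \<epsilon> t) (\<gamma> t))) (at t)"
        by (rule vd_chain2[OF chi_diff dp d_gamma[OF tT]])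
      have "((\<lambda>s. E x s * m s * chi (\<beta> s * x + \<epsilon> s) (\<gamma> s)) has_vector_derivative
          (E x t * m t * (of_real (\<beta>' t * x + \<epsilon>' t) * chi_x (\<beta> t * x + \<epsilon> t) (\<gamma> t) + of_real (\<gamma>' t) * chi_t (\<beta> t * x + \<epsilon> t) (\<gamma> t))
           + (E x t * of_real (- (2 * a t * \<alpha> t + d t) * (1 / sqrt (\<mu> t))) + (\<i> * of_real (\<alpha>' t * x\<^sup>2 + \<delta>' t * x + \<kappa>' t) * E x t) * m t) * chi (\<beta> t * x + \<epsilon> t) (\<gamma> t))) (at t)"
        by (intro has_vector_derivative_mult dE dm dK)
      then show ?thesis unfolding psi_eq
        by (rule has_vector_derivative_eq_rhs) (simp add: PT_def m_def algebra_simps)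
    qed
    have dphi2: "((\<lambda>y. \<alpha> t * y\<^sup>2 + \<delta> t * y + \<kappa> t) has_real_derivative (2 * \<alpha> t * x + \<delta> t)) (at x)"
      by (auto intro!: derivative_eq_intros)
    have dE2: "((\<lambda>y. E y t) has_vector_derivative (\<i> * of_real (2 * \<alpha> t * x + \<delta> t) * E x t)) (at x)"
      unfolding E_def by (rule vd_exp[OF dphi2])
    have dp2: "((\<lambda>y. \<beta> t * y + \<epsilon> t) has_real_derivative \<beta> t) (at x)"
      by (auto intro!: derivative_eq_intros)
    have dq2: "((\<lambda>y. \<gamma> t) has_real_derivative 0) (at x)"
      by (auto intro!: derivative_eq_intros)
    have dK2: "((\<lambda>y. chi (\<beta> t * y + \<epsilon> t) (\<gamma> t)) has_vector_derivative
           (of_real (\<beta> t) * chi_x (\<beta> t * x + \<epsilon> t) (\<gamma> t) + of_real 0 * chi_t (\<beta> t * x + \<epsilon> t) (\<gamma> t))) (at x)"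
      by (rule vd_chain2[OF chi_diff dp2 dq2])
    show "((\<lambda>y. \<psi> y t) has_vector_derivative PX x t) (at x)"
    proof -
      have "((\<lambda>y. E y t * m t * chi (\<beta> t * y + \<epsilon> t) (\<gamma> t)) has_vector_derivative
          (E x t * m t * (of_real (\<beta> t) * chi_x (\<beta> t * x + \<epsilon> t) (\<gamma> t) + of_real 0 * chi_t (\<beta> t * x + \<epsilon> t) (\<gamma> t))
           + (\<i> * of_real (2 * \<alpha> t * x + \<delta> t) * E x t * m t) * chi (\<beta> t * x + \<epsilon> t) (\<gamma> t))) (at x)"
        by (intro has_vector_derivative_mult has_vector_derivative_mult_left dE2 dK2)
      then show ?thesis unfolding psi_eq
        by (rule has_vector_derivative_eq_rhs) (simp add: PX_def algebra_simps)
    qed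
    show "((\<lambda>y. PX y t) has_vector_derivative PXX x t) (at x)"
    proof -
      have dp3: "((\<lambda>y. \<beta> t * y + \<epsilon> t) has_vector_derivative \<beta> t) (at x)"
        using dp2 by (simp add: has_real_derivative_iff_has_vector_derivative)
      have dX: "((\<lambda>y. chi_x (\<beta> t * y + \<epsilon> t) (\<gamma> t)) has_vector_derivative \<beta> t *\<^sub>R chi_xx (\<beta> t * x + \<epsilon> t) (\<gamma> t)) (at x)"
        using vector_diff_chain_at[OF dp3 chi_diff2] by (simp add: o_def)
      have dL: "((\<lambda>y. \<i> * of_real (2 * \<alpha> t * y + \<delta> t)) has_vector_derivative \<i> * of_real (2 * \<alpha> t)) (at x)"
        by (intro has_vector_derivative_mult_right has_vector_derivative_of_real) (auto intro!: derivative_eq_intros)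
      have "((\<lambda>y. E y t * m t * (\<i> * of_real (2 * \<alpha> t * y + \<delta> t) * chi (\<beta> t * y + \<epsilon> t) (\<gamma> t)
        + of_real (\<beta> t) * chi_x (\<beta> t * y + \<epsilon> t) (\<gamma> t))) has_vector_derivative
          (E x t * m t * ((\<i> * of_real (2 * \<alpha> t * x + \<delta> t) * (of_real (\<beta> t) * chi_x (\<beta> t * x + \<epsilon> t) (\<gamma> t) + of_real 0 * chi_t (\<beta> t * x + \<epsilon> t) (\<gamma> t))
               + \<i> * of_real (2 * \<alpha> t) * chi (\<beta> t * x + \<epsilon> t) (\<gamma> t))
              + of_real (\<beta> t) * (\<beta> t *\<^sub>R chi_xx (\<beta> t * x + \<epsilon> t) (\<gamma> t)))
           + (\<i> * of_real (2 * \<alpha> t * x + \<delta> t) * E x t * m t) * (\<i> * of_real (2 * \<alpha> t * x + \<delta> t) * chi (\<beta> t * x + \<epsilon> t) (\<gamma> t)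
        + of_real (\<beta> t) * chi_x (\<beta> t * x + \<epsilon> t) (\<gamma> t)))) (at x)"
        by (intro has_vector_derivative_mult has_vector_derivative_mult_left has_vector_derivative_add
            has_vector_derivative_mult_right dE2 dK2 dX dL)
      then show ?thesis unfolding psiX_eq
        by (rule has_vector_derivative_eq_rhs) (simp add: PXX_def scaleR_conv_of_real algebra_simps power2_eq_square)
    qed
    show "\<i> * PT x t =
    - complex_of_real (a t) * PXX x t + complex_of_real (b t * x\<^sup>2) * \<psi> x t -
    \<i> * complex_of_real (c t * x) * PX x t - \<i> * complex_of_real (d t) * \<psi> x t -
    complex_of_real (f t * x) * \<psi> x t + \<i> * complex_of_real (g t) * PX x t"
    proof -
      have ct: "chi_t (\<beta> t * x + \<epsilon> t) (\<gamma> t) = \<i> * (- chi_xx (\<beta> t * x + \<epsilon> t) (\<gamma> t) + of_real (c0 * (\<beta> t * x + \<epsilon> t)\<^sup>2) * chi (\<beta> t * x + \<epsilon> t) (\<gamma> t))"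
      proof -
        have "\<i> * (- \<i> * chi_t (\<beta> t * x + \<epsilon> t) (\<gamma> t)) = \<i> * (- chi_xx (\<beta> t * x + \<epsilon> t) (\<gamma> t) + of_real (c0 * (\<beta> t * x + \<epsilon> t)\<^sup>2) * chi (\<beta> t * x + \<epsilon> t) (\<gamma> t))"
          using chi_eq by simp
        then show ?thesis by (simp add: algebra_simps)
      qed
      have ea: "\<alpha>' t = c0 * a t * (\<beta> t)^4 - b t - 2 * c t * \<alpha> t - 4 * a t * (\<alpha> t)\<^sup>2" using eq_alpha[OF tT] by (simp add: algebra_simps)
      have eb: "\<beta>' t = - (c t + 4 * a t * \<alpha> t) * \<beta> t" using eq_beta[OF tT] by (simp add: algebra_simps eq_neg_iff_add_eq_0)
      have eg: "\<gamma>' t = - a t * (\<beta> t)\<^sup>2" using eq_gamma[OF tT] by (simp add: algebra_simps eq_neg_iff_add_eq_0)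
      have ed: "\<delta>' t = f t + 2 * g t * \<alpha> t + 2 * c0 * a t * (\<beta> t) ^ 3 * \<epsilon> t - (c t + 4 * a t * \<alpha> t) * \<delta> t" using eq_delta[OF tT] by (simp add: algebra_simps)
      show ?thesis
        unfolding psi_eq PT_def PX_def PXX_def ct ea eb eg ed eq_eps[OF tT] eq_kappa[OF tT]
        by (simp add: algebra_simps power2_eq_square power3_eq_cube power4_eq_xxxx)
    qed
  qed
qed

end
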